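(* Consider a discounted Markov decision problem and the policy mirror descent method as described in the context, with $\pi^{(0)}\in\operatorname{rint}\Pi$ and constant step size $\eta_k=\eta>0$ for all $k\ge0$. Then for any $\rho\in\Delta(\mathcal{S})$ and all $k\ge0$, \[ V_\rho(\pi^{(k)})-V_\rho^\star\le\frac1{k+1}\left(\frac{D^\star_0}{\eta(1-\gamma)}+\frac1{(1-\gamma)^2}\right). \]
   Context: A discounted Markov decision problem (cost-minimization form): finite state set $\mathcal{S}$, finite action set $\mathcal{A}$, transition probabilities $P(s'|s,a)$, cost $R:\mathcal{S}\times\mathcal{A}\to[0,1]$, discount $\gamma\in[0,1)$. Policies $\Pi=\Delta(\mathcal{A})^{|\mathcal{S}|}$, $\pi=(\pi_s)_s$ with $\pi_s\in\Delta(\mathcal{A})$; $\operatorname{rint}\Pi$ is the set of policies with all entries $\pi_{s,a}>0$. $V_s(\pi)=\mathbf{E}\bigl[\sum_{t\ge0}\gamma^tR(s_t,a_t)\mid s_0=s\bigr]$ with $a_t\sim\pi_{s_t}$, $s_{t+1}\sim P(\cdot|s_t,a_t)$; $V_\rho(\pi)=\sum_s\rho_sV_s(\pi)$; $V^\star_\rho=\min_{\pi\in\Pi}V_\rho(\pi)$; $\pi^\star$ denotes a policy minimizing $V_s$ simultaneously for all $s$. $Q_{s,a}(\pi)=R_{s,a}+\gamma\sum_{s'}P(s'|s,a)V_{s'}(\pi)$, $Q_s(\pi)\in\mathbf{R}^{|\mathcal{A}|}$. Discounted state visitation: $d_{s,s'}(\pi)=(1-\gamma)\sum_{t\ge0}\gamma^t\Pr^\pi(s_t=s'\mid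 s_0=s)$, $d_{\rho,s'}(\pi)=\sum_s\rho_sd_{s,s'}(\pi)$. Bregman divergence: $h:\mathbf{R}^{|\mathcal{A}|}\to\mathbf{R}\cup\{+\infty\}$ is a convex function of Legendre type (proper, closed, essentially smooth, strictly convex on the relative interior of its domain) with $\Delta(\mathcal{A})\subseteq\operatorname{dom}h$ and $\operatorname{rint}\Delta(\mathcal{A})\subseteq\operatorname{rint}\operatorname{dom}h$ (e.g. $h=\frac12\|\cdot\|_2^2$, or negative entropy $h(p)=\sum_ap_a\log p_a$); $D(p,p')=h(p)-h(p')-\langle\nabla h(p'),p-p'\rangle$ for $p\in\operatorname{dom}h$, $p'\in\operatorname{rint}\operatorname{dom}h$. Policy mirror descent: given $\pi^{(0)}$ and step sizes $\eta_k>0$, for each $s\in\mathcal{S}$, $\pi^{(k+1)}_s=\arg\min_{p\in\Delta(\mathcal{A})}\{\eta_k\langle Q_s(\pi^{(k)}),p\rangle+D(p,\pi^{(k)}_s)\}$ (the iterates are well defined and remain in $\operatorname{rint}\operatorname{dom}h$). Notation: $D^\star_k=\sum_{s\in\mathcal{S}}d_{\rho,s}(\pi^\star)D(\pi^\star_s,\pi^{(k)}_s)$. *)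

theory Defs
  imports "HOL-Analysis.Analysis"
begin

definition act_simplex :: "(real ^ 'a::finite) set" where
  "act_simplex = {p. (\<forall>a. 0 \<le> p $ a) \<and> (\<Sum>a\<in>UNIV. p $ a) = 1}"

definition policies :: "('s::finite \<Rightarrow> real ^ 'a::finite) set" where
  "policies = {\<pi>. \<forall>s. \<pi> s \<in> act_simplex}"

definition rint_policies :: "('s::finite \<Rightarrow> real ^ 'a::finite) set" where
  "rint_policies = {\<pi>. \<forall>s. \<pi> s \<in> rel_interior act_simplex}"

definition is_mdp :: "('s::finite \<Rightarrow> 'a::finite \<Rightarrow> 's \<Rightarrow> real) \<Rightarrow> ('s \<Rightarrow> 'a \<Rightarrow> real) \<Rightarrow> real \<Rightarrow> bool" where
  "is_mdp P R \<gamma> \<longleftrightarrow>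
     (\<forall>s a s'. 0 \<le> P s a s') \<and> (\<forall>s a. (\<Sum>s'\<in>UNIV. P s a s') = 1) \<and>
     (\<forall>s a. 0 \<le> R s a \<and> R s a \<le> 1) \<and> 0 \<le> \<gamma> \<and> \<gamma> < 1"

definition Ppol :: "('s::finite \<Rightarrow> 'a::finite \<Rightarrow> 's \<Rightarrow> real) \<Rightarrow> ('s \<Rightarrow> real ^ 'a) \<Rightarrow> 's \<Rightarrow> 's \<Rightarrow> real" where
  "Ppol P \<pi> s s' = (\<Sum>a\<in>UNIV. \<pi> s $ a * P s a s')"

text \<open>t-step probabilities Pr^pi(s_t = s' | s_0 = s).\<close>
fun Pstep :: "('s::finite \<Rightarrow> 'a::finite \<Rightarrow> 's \<Rightarrow> real) \<Rightarrow> ('s \<Rightarrow> real ^ 'a) \<Rightarrow> nat \<Rightarrow> 's \<Rightarrow> 's \<Rightarrow> real" where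
  "Pstep P \<pi> 0 s s' = (if s = s' then 1 else 0)"
| "Pstep P \<pi> (Suc t) s s' = (\<Sum>s''\<in>UNIV. Pstep P \<pi> t s s'' * Ppol P \<pi> s'' s')"

text \<open>V_s(pi) = E[ sum_t gamma^t R(s_t,a_t) | s_0 = s ], written out:
  Pr(s_t = s', a_t = a) = Pstep t s s' * pi_{s'}(a).\<close>
definition V :: "('s::finite \<Rightarrow> 'a::finite \<Rightarrow> 's \<Rightarrow> real) \<Rightarrow> ('s \<Rightarrow> 'a \<Rightarrow> real) \<Rightarrow> real \<Rightarrow> ('s \<Rightarrow> real ^ 'a) \<Rightarrow> 's \<Rightarrow> real" where
  "V P R \<gamma> \<pi> s = (\<Sum>t. \<gamma> ^ t * (\<Sum>s'\<in>UNIV. \<Sum>a\<in>UNIV. Pstep P \<pi> t s s' * \<pi> s' $ a * R s' a))"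

definition Vrho :: "('s::finite \<Rightarrow> 'a::finite \<Rightarrow> 's \<Rightarrow> real) \<Rightarrow> ('s \<Rightarrow> 'a \<Rightarrow> real) \<Rightarrow> real \<Rightarrow> ('s \<Rightarrow> real) \<Rightarrow> ('s \<Rightarrow> real ^ 'a) \<Rightarrow> real" where
  "Vrho P R \<gamma> \<rho> \<pi> = (\<Sum>s\<in>UNIV. \<rho> s * V P R \<gamma> \<pi> s)"

definition Vstar :: "('s::finite \<Rightarrow> 'a::finite \<Rightarrow> 's \<Rightarrow> real) \<Rightarrow> ('s \<Rightarrow> 'a \<Rightarrow> real) \<Rightarrow> real \<Rightarrow> ('s \<Rightarrow> real) \<Rightarrow> real" where
  "Vstar P R \<gamma> \<rho> = (INF \<pi>\<in>policies. Vrho P R \<gamma> \<rho> \<pi>)"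

definition Q :: "('s::finite \<Rightarrow> 'a::finite \<Rightarrow> 's \<Rightarrow> real) \<Rightarrow> ('s \<Rightarrow> 'a \<Rightarrow> real) \<Rightarrow> real \<Rightarrow> ('s \<Rightarrow> real ^ 'a) \<Rightarrow> 's \<Rightarrow> real ^ 'a" where
  "Q P R \<gamma> \<pi> s = (\<chi> a. R s a + \<gamma> * (\<Sum>s'\<in>UNIV. P s a s' * V P R \<gamma> \<pi> s'))"

definition dvis :: "('s::finite \<Rightarrow> 'a::finite \<Rightarrow> 's \<Rightarrow> real) \<Rightarrow> real \<Rightarrow> ('s \<Rightarrow> real ^ 'a) \<Rightarrow> 's \<Rightarrow> 's \<Rightarrow> real" where
  "dvis P \<gamma> \<pi> s s' = (1 - \<gamma>) * (\<Sum>t. \<gamma> ^ t * Pstep P \<pi> t s s')"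

definition drho :: "('s::finite \<Rightarrow> 'a::finite \<Rightarrow> 's \<Rightarrow> real) \<Rightarrow> real \<Rightarrow> ('s \<Rightarrow> real) \<Rightarrow> ('s \<Rightarrow> real ^ 'a) \<Rightarrow> 's \<Rightarrow> real" where
  "drho P \<gamma> \<rho> \<pi> s' = (\<Sum>s\<in>UNIV. \<rho> s * dvis P \<gamma> \<pi> s s')"

text \<open>An extended-real convex function h : R^|A| -> R \<union> {+oo} is represented by its
  effective domain C = dom h and its (finite) values h on C; h = +oo outside C.\<close>
definition legendre :: "(real ^ 'a::finite) set \<Rightarrow> (real ^ 'a \<Rightarrow> real) \<Rightarrow> bool" where
  "legendre C h \<longleftrightarrow>
     C \<noteq> {} \<and> convex C \<and> convex_on C h \<and>
     closed {(x, t). x \<in> C \<and> h x \<le> t} \<and>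
     interior C \<noteq> {} \<and>
     (\<forall>x\<in>interior C. h differentiable (at x)) \<and>
     (\<forall>X x. (\<forall>n. X n \<in> interior C) \<longrightarrow> X \<longlonglongrightarrow> x \<longrightarrow> x \<in> frontier C \<longrightarrow>
        filterlim (\<lambda>n. onorm (frechet_derivative h (at (X n)))) at_top sequentially) \<and>
     (\<forall>x\<in>interior C. \<forall>y\<in>interior C. x \<noteq> y \<longrightarrow> (\<forall>u::real. 0 < u \<and> u < 1 \<longrightarrow>
        h ((1 - u) *\<^sub>R x + u *\<^sub>R y) < (1 - u) * h x + u * h y))"

definition bregman :: "(real ^ 'a::finite \<Rightarrow> real) \<Rightarrow> real ^ 'a \<Rightarrow> real ^ 'a \<Rightarrow> real" where
  "bregman h p p' = h p - h p' - frechet_derivative h (at p') (p - p')"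

definition is_pmd :: "('s::finite \<Rightarrow> 'a::finite \<Rightarrow> 's \<Rightarrow> real) \<Rightarrow> ('s \<Rightarrow> 'a \<Rightarrow> real) \<Rightarrow> real
    \<Rightarrow> (real ^ 'a \<Rightarrow> real) \<Rightarrow> (nat \<Rightarrow> real) \<Rightarrow> (nat \<Rightarrow> 's \<Rightarrow> real ^ 'a) \<Rightarrow> bool" where
  "is_pmd P R \<gamma> h \<eta> \<pi> \<longleftrightarrow>
     (\<forall>k s. is_arg_min (\<lambda>p. \<eta> k * inner (Q P R \<gamma> (\<pi> k) s) p + bregman h p (\<pi> k s))
                        (\<lambda>p. p \<in> act_simplex) (\<pi> (Suc k) s))"

end

theory Submission
  imports Defs
begin


lemma dir_deriv_aux:
  fixes f :: "real^'a::finite \<Rightarrow> real"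
  assumes "(f has_derivative D) (at x)"
  shows "((\<lambda>t. f (x + t *\<^sub>R d) - t * c) has_real_derivative (D d - c)) (at 0)"
proof -
  have l: "linear D" using assms has_derivative_linear by blast
  have 1: "((\<lambda>t::real. x + t *\<^sub>R d) has_derivative (\<lambda>t. t *\<^sub>R d)) (at 0)"
    by (auto intro!: derivative_eq_intros)
  have 2: "((\<lambda>t. f (x + t *\<^sub>R d)) has_derivative (\<lambda>t. D (t *\<^sub>R d))) (at 0)"
    using has_derivative_compose[OF 1, of f D] assms by simp
  have 3: "(\<lambda>t. D (t *\<^sub>R d)) = (\<lambda>t. t * D d)"
    using l by (simp add: linear_scale)
  have 4: "((\<lambda>t. f (x + t *\<^sub>R d) - t * c) has_derivative (\<lambda>t. t * D d - t * c)) (at 0)"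
    using 2 unfolding 3 by (auto intro!: derivative_eq_intros)
  have 5: "(\<lambda>t. t * D d - t * c) = (*) (D d - c)" by (rule ext) (simp add: algebra_simps)
  show ?thesis unfolding has_field_derivative_def
    using 4 unfolding 5 .
qed

lemma dir_upper:
  fixes f :: "real^'a::finite \<Rightarrow> real"
  assumes "(f has_derivative D) (at x)"
    and "\<And>t. 0 < t \<Longrightarrow> t \<le> 1 \<Longrightarrow> f (x + t *\<^sub>R d) \<le> f x + t * c"
  shows "D d \<le> c"
proof (rule ccontr)
  assume "\<not> D d \<le> c"
  then have "0 < D d - c" by simp
  from DERIV_pos_inc_right[OF dir_deriv_aux[OF assms(1)] this]
  obtain e where e: "e > 0" "\<And>t. t > 0 \<Longrightarrow> t < e \<Longrightarrow> f (x + 0 *\<^sub>R d) - 0 * c < f (x + (0 + t) *\<^sub>R d) - (0 + t) * c"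
    by blast
  define t where "t = min (e/2) 1"
  have "0 < t" "t < e" "t \<le> 1" using e by (auto simp: t_def)
  with e(2)[of t] assms(2)[of t] show False by simp
qed

lemma dir_lower:
  fixes f :: "real^'a::finite \<Rightarrow> real"
  assumes "(f has_derivative D) (at x)"
    and "\<And>t. 0 < t \<Longrightarrow> t \<le> 1 \<Longrightarrow> f x + t * c \<le> f (x + t *\<^sub>R d)"
  shows "c \<le> D d"
proof (rule ccontr)
  assume "\<not> c \<le> D d"
  then have "D d - c < 0" by simp
  from DERIV_neg_dec_right[OF dir_deriv_aux[OF assms(1)] this]
  obtain e where e: "e > 0" "\<And>t. t > 0 \<Longrightarrow> t < e \<Longrightarrow> f (x + 0 *\<^sub>R d) - 0 * c > f (x + (0 + t) *\<^sub>R d) - (0 + t) * c"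
    by blast
  define t where "t = min (e/2) 1"
  have "0 < t" "t < e" "t \<le> 1" using e by (auto simp: t_def)
  with e(2)[of t] assms(2)[of t] show False by simp
qed

lemma grad_ineq:
  fixes h :: "real^'a::finite \<Rightarrow> real"
  assumes cv: "convex_on C h" and "convex C" and x: "x \<in> C" and z: "z \<in> C"
    and d: "(h has_derivative D) (at x)"
  shows "h x + D (z - x) \<le> h z"
proof -
  have "D (z - x) \<le> h z - h x"
  proof (rule dir_upper[OF d])
    fix t :: real assume t: "0 < t" "t \<le> 1"
    have e: "x + t *\<^sub>R (z - x) = (1 - t) *\<^sub>R x + t *\<^sub>R z" by (simp add: algebra_simps)
    have "h ((1 - t) *\<^sub>R x + t *\<^sub>R z) \<le> (1 - t) * h x + t * h z"
      using convex_onD[OF cv, of t x z] t x z by simp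
    then show "h (x + t *\<^sub>R (z - x)) \<le> h x + t * (h z - h x)"
      unfolding e by (simp add: algebra_simps)
  qed
  then show ?thesis by simp
qed

lemma minimizer_interior:
  fixes h :: "real^'a::finite \<Rightarrow> real"
  assumes leg: "legendre C h" and S: "convex S" "S \<subseteq> C" and u: "u \<in> S" "u \<in> interior C"
    and l: "linear lf" and ps: "p \<in> S" and mn: "\<And>q. q \<in> S \<Longrightarrow> h p + lf p \<le> h q + lf q"
  shows "p \<in> interior C"
proof (rule ccontr)
  assume np: "p \<notin> interior C"
  have cC: "convex C" and cvh: "convex_on C h" and dif: "\<forall>x\<in>interior C. h differentiable (at x)"
    and blow: "\<forall>X x. (\<forall>n. X n \<in> interior C) \<longrightarrow> X \<longlonglongrightarrow> x \<longrightarrow> x \<in> frontier C \<longrightarrow>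
        filterlim (\<lambda>n. onorm (frechet_derivative h (at (X n)))) at_top sequentially"
    using leg unfolding legendre_def by auto
  have hd: "(h has_derivative frechet_derivative h (at x)) (at x)" if "x \<in> interior C" for x
    using dif that frechet_derivative_works by blast
  have pC: "p \<in> C" using ps S by auto
  have pfr: "p \<in> frontier C" using pC np closure_subset unfolding frontier_def by auto
  define v where "v = u - p"
  define pt where "pt t = p + t *\<^sub>R v" for t :: real
  have ptI: "pt t \<in> interior C" if "0 < t" "t \<le> 1" for t
  proof -
    have "p - t *\<^sub>R (p - u) \<in> interior C"
      using mem_interior_closure_convex_shrink[OF cC u(2), of p t] pC closure_subset that by auto
    then show ?thesis unfolding pt_def v_def by (simp add: algebra_simps)
  qed
  have ptS: "pt t \<in> S" if "0 \<le> t" "t \<le> 1" for t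
  proof -
    have "(1 - t) *\<^sub>R p + t *\<^sub>R u \<in> S" using convexD_alt[OF S(1) ps u(1)] that by simp
    then show ?thesis unfolding pt_def v_def by (simp add: algebra_simps)
  qed
  obtain \<epsilon> where ep: "\<epsilon> > 0" "cball u \<epsilon> \<subseteq> interior C"
    using u(2) open_interior open_contains_cball by blast
  have "continuous_on (cball u \<epsilon>) h"
    using ep dif by (meson continuous_at_imp_continuous_on differentiable_imp_continuous_within subsetD)
  then have "compact (h ` cball u \<epsilon>)" by (simp add: compact_continuous_image)
  then obtain K where K: "\<And>z. z \<in> cball u \<epsilon> \<Longrightarrow> h z \<le> K"
    using compact_imp_bounded bounded_real by (metis abs_le_D1 imageI)
  define Du where "Du = frechet_derivative h (at u)"
  have Duh: "(h has_derivative Du) (at u)" using hd u(2) Du_def by simp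
  define B where "B = K - h u + \<bar>Du v\<bar> + \<bar>lf v\<bar>"
  have intC: "interior C \<subseteq> C" by (rule interior_subset)
  have bnd: "onorm (frechet_derivative h (at (pt t))) \<le> B / \<epsilon>" if t: "0 < t" "t \<le> 1" for t
  proof -
    define Dt where "Dt = frechet_derivative h (at (pt t))"
    have Dth: "(h has_derivative Dt) (at (pt t))" using hd ptI[OF t] Dt_def by simp
    have lDt: "linear Dt" using Dth has_derivative_linear by blast
    have ptC: "pt t \<in> C" using ptI[OF t] intC by auto
    have a1: "h (pt t) + Dt (p - pt t) \<le> h p"
      by (rule grad_ineq[OF cvh cC ptC pC Dth])
    have "p - pt t = (- t) *\<^sub>R v" by (simp add: pt_def)
    then have a1': "h (pt t) - t * Dt v \<le> h p" using a1 lDt by (simp add: linear_scale linear_neg)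
    have "h p + lf p \<le> h (pt t) + lf (pt t)" using mn ptS t by simp
    moreover have "lf (pt t) = lf p + t * lf v" using l by (simp add: pt_def linear_add linear_scale)
    ultimately have "- t * Dt v \<le> t * lf v" using a1' by simp
    then have "t * (- Dt v) \<le> t * lf v" by simp
    then have a: "- Dt v \<le> lf v" using t(1) by (metis mult_le_cancel_left_pos)
    have b1: "h u + Du (pt t - u) \<le> h (pt t)"
      by (rule grad_ineq[OF cvh cC _ ptC Duh]) (use u S in auto)
    have "pt t - u = (t - 1) *\<^sub>R v" by (simp add: pt_def v_def algebra_simps)
    then have "Du (pt t - u) = (t - 1) * Du v"
      using Duh has_derivative_linear by (fastforce simp: linear_scale)
    moreover have "\<bar>(t - 1) * Du v\<bar> \<le> \<bar>Du v\<bar>" using t by (simp add: abs_mult mult_left_le_one_le)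
    ultimately have b: "h u - \<bar>Du v\<bar> \<le> h (pt t)" using b1 by linarith
    have c: "Dt w \<le> B" if w: "norm w \<le> \<epsilon>" for w
    proof -
      have zc: "u + w \<in> cball u \<epsilon>" using w by (simp add: dist_norm)
      then have "u + w \<in> C" using ep intC by auto
      from grad_ineq[OF cvh cC ptC this Dth]
      have c1: "h (pt t) + Dt (u + w - pt t) \<le> K" using K[OF zc] by linarith
      have eq: "u + w - pt t = w + (1 - t) *\<^sub>R v" by (simp add: pt_def v_def algebra_simps)
      have "Dt (u + w - pt t) = Dt w + (1 - t) * Dt v" unfolding eq using lDt by (simp add: linear_add linear_scale)
      moreover have "(1 - t) * (- Dt v) \<le> (1 - t) * lf v" using a t by (intro mult_left_mono) auto
      moreover have "(1 - t) * lf v \<le> \<bar>lf v\<bar>"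
      proof -
        have "(1 - t) * lf v \<le> (1 - t) * \<bar>lf v\<bar>" by (rule mult_left_mono) (use t in auto)
        also have "\<dots> \<le> \<bar>lf v\<bar>" using t by (simp add: mult_left_le_one_le)
        finally show ?thesis .
      qed
      ultimately show ?thesis using c1 b unfolding B_def by (simp add: algebra_simps)
    qed
    have d: "\<bar>Dt y\<bar> \<le> B / \<epsilon> * norm y" for y
    proof (cases "y = 0")
      case True then show ?thesis using lDt by (simp add: linear_0)
    next
      case False
      then have ny: "norm y > 0" by simp
      have "Dt ((\<epsilon> / norm y) *\<^sub>R y) \<le> B" using c[of "(\<epsilon> / norm y) *\<^sub>R y"] ep ny by simp
      then have d1: "(\<epsilon> / norm y) * Dt y \<le> B" using lDt by (simp add: linear_scale)
      have "Dt ((\<epsilon> / norm y) *\<^sub>R (-y)) \<le> B" using c[of "(\<epsilon> / norm y) *\<^sub>R (-y)"] ep ny by simp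
      then have d2: "(\<epsilon> / norm y) * (- Dt y) \<le> B" using lDt by (simp add: linear_scale linear_neg)
      have "(\<epsilon> / norm y) * \<bar>Dt y\<bar> \<le> B" using d1 d2 by (cases "Dt y \<ge> 0") auto
      then have "\<epsilon> * \<bar>Dt y\<bar> \<le> B * norm y" using ny by (simp add: field_simps)
      then show ?thesis using ep ny by (simp add: field_simps)
    qed
    show ?thesis unfolding Dt_def[symmetric] by (rule onorm_le) (use d in simp)
  qed
  define X where "X n = pt (inverse (real (Suc n)))" for n
  have Xi: "X n \<in> interior C" for n
    unfolding X_def by (rule ptI) (auto simp: field_simps)
  have "(\<lambda>n. p + inverse (real (Suc n)) *\<^sub>R v) \<longlonglongrightarrow> p + 0 *\<^sub>R v"
    by (intro tendsto_intros LIMSEQ_inverse_real_of_nat)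
  then have Xl: "X \<longlonglongrightarrow> p" unfolding X_def pt_def by simp
  from blow Xi Xl pfr have "filterlim (\<lambda>n. onorm (frechet_derivative h (at (X n)))) at_top sequentially"
    by blast
  then have "eventually (\<lambda>n. B / \<epsilon> + 1 \<le> onorm (frechet_derivative h (at (X n)))) sequentially"
    unfolding filterlim_at_top by blast
  then obtain n where "B / \<epsilon> + 1 \<le> onorm (frechet_derivative h (at (X n)))"
    using eventually_sequentially by auto
  moreover have "onorm (frechet_derivative h (at (X n))) \<le> B / \<epsilon>"
    unfolding X_def by (rule bnd) (auto simp: field_simps)
  ultimately show False by simp
qed




definition rpol :: "('s::finite \<Rightarrow> 'a::finite \<Rightarrow> real) \<Rightarrow> ('s \<Rightarrow> real^'a) \<Rightarrow> 's \<Rightarrow> real" where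
  "rpol R \<pi> s = (\<Sum>a\<in>UNIV. \<pi> s $ a * R s a)"

definition Wd :: "('s::finite \<Rightarrow> 'a::finite \<Rightarrow> 's \<Rightarrow> real) \<Rightarrow> real \<Rightarrow> ('s \<Rightarrow> real^'a) \<Rightarrow> ('s \<Rightarrow> real) \<Rightarrow> 's \<Rightarrow> real" where
  "Wd P \<gamma> \<pi> f s = (\<Sum>t. \<gamma>^t * (\<Sum>s'\<in>UNIV. Pstep P \<pi> t s s' * f s'))"

lemma geo_summable:
  fixes a :: "nat \<Rightarrow> real"
  assumes "0 \<le> \<gamma>" "\<gamma> < 1" "\<And>t. \<bar>a t\<bar> \<le> B * \<gamma>^t"
  shows "summable a"
proof (rule summable_comparison_test')
  show "summable (\<lambda>t. B * \<gamma>^t)" using assms by (intro summable_mult summable_geometric) simp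
  show "norm (a t) \<le> B * \<gamma>^t" for t using assms by simp
qed

lemma stoch_bound:
  fixes w f :: "'s::finite \<Rightarrow> real"
  assumes "\<And>x. 0 \<le> w x" "(\<Sum>x\<in>UNIV. w x) = 1" "\<And>x. \<bar>f x\<bar> \<le> B"
  shows "\<bar>\<Sum>x\<in>UNIV. w x * f x\<bar> \<le> B"
proof -
  have "\<bar>\<Sum>x\<in>UNIV. w x * f x\<bar> \<le> (\<Sum>x\<in>UNIV. \<bar>w x * f x\<bar>)" by (rule sum_abs)
  also have "\<dots> \<le> (\<Sum>x\<in>UNIV. w x * B)"
    by (intro sum_mono) (use assms in \<open>simp add: abs_mult mult_left_mono\<close>)
  also have "\<dots> = B" using assms(2) by (simp add: sum_distrib_right[symmetric])
  finally show ?thesis .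
qed

lemma fbound: "\<exists>B. \<forall>x. \<bar>(f::'s::finite \<Rightarrow> real) x\<bar> \<le> B"
  by (rule exI[of _ "\<Sum>x\<in>UNIV. \<bar>f x\<bar>"]) (auto intro: member_le_sum)

lemma pol_nonneg: "\<pi> \<in> policies \<Longrightarrow> 0 \<le> \<pi> s $ a"
  by (simp add: policies_def act_simplex_def)
lemma pol_sum: "\<pi> \<in> policies \<Longrightarrow> (\<Sum>a\<in>UNIV. \<pi> s $ a) = 1"
  by (simp add: policies_def act_simplex_def)

context
  fixes P :: "'s::finite \<Rightarrow> 'a::finite \<Rightarrow> 's \<Rightarrow> real" and R :: "'s \<Rightarrow> 'a \<Rightarrow> real" and \<gamma> :: real
  assumes mdp: "is_mdp P R \<gamma>"
begin

lemma P_nonneg: "0 \<le> P s a s'" and P_sum: "(\<Sum>s'\<in>UNIV. P s a s') = 1"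
  and R_bnd: "0 \<le> R s a" "R s a \<le> 1" and g0: "0 \<le> \<gamma>" and g1: "\<gamma> < 1"
  using mdp by (auto simp: is_mdp_def)

lemma Ppol_nonneg: "\<pi> \<in> policies \<Longrightarrow> 0 \<le> Ppol P \<pi> s s'"
  unfolding Ppol_def by (intro sum_nonneg mult_nonneg_nonneg pol_nonneg P_nonneg)

lemma Ppol_sum: "\<pi> \<in> policies \<Longrightarrow> (\<Sum>s'\<in>UNIV. Ppol P \<pi> s s') = 1"
  unfolding Ppol_def by (subst sum.swap) (simp add: sum_distrib_left[symmetric] P_sum pol_sum)

lemma Pstep_nonneg: "\<pi> \<in> policies \<Longrightarrow> 0 \<le> Pstep P \<pi> t s s'"
  by (induction t arbitrary: s') (auto intro!: sum_nonneg mult_nonneg_nonneg Ppol_nonneg)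

lemma Pstep_sum: "\<pi> \<in> policies \<Longrightarrow> (\<Sum>s'\<in>UNIV. Pstep P \<pi> t s s') = 1"
proof (induction t)
  case 0 then show ?case by simp
next
  case (Suc t)
  have "(\<Sum>s'\<in>UNIV. Pstep P \<pi> (Suc t) s s') = (\<Sum>s''\<in>UNIV. Pstep P \<pi> t s s'' * (\<Sum>s'\<in>UNIV. Ppol P \<pi> s'' s'))"
    by (simp add: sum_distrib_left) (rule sum.swap)
  also have "\<dots> = 1" using Suc by (simp add: Ppol_sum)
  finally show ?case .
qed

lemma Pstep_add: "Pstep P \<pi> (m + n) s s' = (\<Sum>u\<in>UNIV. Pstep P \<pi> m s u * Pstep P \<pi> n u s')"
proof (induction n arbitrary: s')
  case 0 then show ?case by (simp add: if_distrib cong: if_cong)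
next
  case (Suc n)
  have "Pstep P \<pi> (m + Suc n) s s' = (\<Sum>w\<in>UNIV. (\<Sum>u\<in>UNIV. Pstep P \<pi> m s u * Pstep P \<pi> n u w) * Ppol P \<pi> w s')"
    by (simp add: Suc)
  also have "\<dots> = (\<Sum>u\<in>UNIV. Pstep P \<pi> m s u * (\<Sum>w\<in>UNIV. Pstep P \<pi> n u w * Ppol P \<pi> w s'))"
    by (simp add: sum_distrib_left sum_distrib_right mult.assoc) (rule sum.swap)
  finally show ?case by simp
qed

lemma Pstep_Suc_left: "Pstep P \<pi> (Suc t) s s' = (\<Sum>u\<in>UNIV. Ppol P \<pi> s u * Pstep P \<pi> t u s')"
proof -
  have "Pstep P \<pi> (1 + t) s s' = (\<Sum>u\<in>UNIV. Pstep P \<pi> 1 s u * Pstep P \<pi> t u s')" by (rule Pstep_add)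
  moreover have "Pstep P \<pi> 1 s u = Ppol P \<pi> s u" for u by (simp add: if_distrib[of "\<lambda>x. x * _"] cong: if_cong)
  ultimately show ?thesis by simp
qed

lemma Pstep_f_bound:
  assumes "\<pi> \<in> policies" "\<And>x. \<bar>f x\<bar> \<le> B"
  shows "\<bar>\<Sum>s'\<in>UNIV. Pstep P \<pi> t s s' * f s'\<bar> \<le> B"
  by (rule stoch_bound) (use assms Pstep_nonneg Pstep_sum in auto)

lemma W_summable:
  assumes "\<pi> \<in> policies"
  shows "summable (\<lambda>t. \<gamma>^t * (\<Sum>s'\<in>UNIV. Pstep P \<pi> t s s' * f s'))"
proof -
  obtain B where B: "\<And>x. \<bar>f x\<bar> \<le> B" using fbound by blast
  show ?thesis
  proof (rule geo_summable[OF g0 g1])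
    fix t show "\<bar>\<gamma>^t * (\<Sum>s'\<in>UNIV. Pstep P \<pi> t s s' * f s')\<bar> \<le> B * \<gamma>^t"
    proof -
      have "\<bar>\<Sum>s'\<in>UNIV. Pstep P \<pi> t s s' * f s'\<bar> \<le> B" by (rule Pstep_f_bound[OF assms B])
      then have "\<gamma>^t * \<bar>\<Sum>s'\<in>UNIV. Pstep P \<pi> t s s' * f s'\<bar> \<le> \<gamma>^t * B"
        using g0 by (intro mult_left_mono) auto
      then show ?thesis using g0 by (simp add: abs_mult mult.commute)
    qed
  qed
qed

lemma W_eq:
  assumes pol: "\<pi> \<in> policies"
  shows "Wd P \<gamma> \<pi> f s = f s + \<gamma> * (\<Sum>u\<in>UNIV. Ppol P \<pi> s u * Wd P \<gamma> \<pi> f u)"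
proof -
  let ?a = "\<lambda>s t. \<gamma>^t * (\<Sum>s'\<in>UNIV. Pstep P \<pi> t s s' * f s')"
  have sm: "summable (?a u)" for u using W_summable[OF pol] .
  have e1: "Wd P \<gamma> \<pi> f s = (\<Sum>t. ?a s (Suc t)) + ?a s 0"
    unfolding Wd_def using suminf_split_head[OF sm[of s]] by simp
  have e2: "?a s 0 = f s" by (simp add: if_distrib[of "\<lambda>x. x * _"] cong: if_cong)
  have e3: "?a s (Suc t) = \<gamma> * (\<Sum>u\<in>UNIV. Ppol P \<pi> s u * ?a u t)" for t
  proof -
    have "(\<Sum>s'\<in>UNIV. Pstep P \<pi> (Suc t) s s' * f s') = (\<Sum>s'\<in>UNIV. \<Sum>u\<in>UNIV. Ppol P \<pi> s u * Pstep P \<pi> t u s' * f s')"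
      by (simp del: Pstep.simps add: Pstep_Suc_left sum_distrib_right)
    also have "\<dots> = (\<Sum>u\<in>UNIV. Ppol P \<pi> s u * (\<Sum>s'\<in>UNIV. Pstep P \<pi> t u s' * f s'))"
      by (subst sum.swap) (simp add: sum_distrib_left mult.assoc)
    finally show ?thesis by (simp add: sum_distrib_left algebra_simps)
  qed
  have e4: "(\<Sum>t. \<gamma> * (\<Sum>u\<in>UNIV. Ppol P \<pi> s u * ?a u t)) = \<gamma> * (\<Sum>u\<in>UNIV. Ppol P \<pi> s u * Wd P \<gamma> \<pi> f u)"
  proof -
    have "(\<Sum>t. \<gamma> * (\<Sum>u\<in>UNIV. Ppol P \<pi> s u * ?a u t)) = \<gamma> * (\<Sum>t. \<Sum>u\<in>UNIV. Ppol P \<pi> s u * ?a u t)"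
      by (rule suminf_mult) (intro summable_sum summable_mult sm)
    also have "(\<Sum>t. \<Sum>u\<in>UNIV. Ppol P \<pi> s u * ?a u t) = (\<Sum>u\<in>UNIV. \<Sum>t. Ppol P \<pi> s u * ?a u t)"
      by (rule suminf_sum) (intro summable_mult sm)
    also have "\<dots> = (\<Sum>u\<in>UNIV. Ppol P \<pi> s u * Wd P \<gamma> \<pi> f u)"
      unfolding Wd_def by (intro sum.cong refl) (rule suminf_mult[OF sm])
    finally show ?thesis by simp
  qed
  have e5: "(\<lambda>t. ?a s (Suc t)) = (\<lambda>t. \<gamma> * (\<Sum>u\<in>UNIV. Ppol P \<pi> s u * ?a u t))"
    by (rule ext) (rule e3)
  show ?thesis unfolding e1 e2 e5 e4 by simp
qed

lemma W_unique:
  assumes pol: "\<pi> \<in> policies"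
    and x: "\<And>s. x s = f s + \<gamma> * (\<Sum>u\<in>UNIV. Ppol P \<pi> s u * x u)"
    and y: "\<And>s. y s = f s + \<gamma> * (\<Sum>u\<in>UNIV. Ppol P \<pi> s u * y u)"
  shows "x s = y s"
proof -
  define M where "M = Max (range (\<lambda>s. \<bar>x s - y s\<bar>))"
  have Mge: "\<bar>x s - y s\<bar> \<le> M" for s unfolding M_def by (rule Max_ge) auto
  have "M \<in> range (\<lambda>s. \<bar>x s - y s\<bar>)" unfolding M_def by (rule Max_in) auto
  then obtain s0 where s0: "M = \<bar>x s0 - y s0\<bar>" by auto
  have "x s0 - y s0 = \<gamma> * (\<Sum>u\<in>UNIV. Ppol P \<pi> s0 u * (x u - y u))"
    using x[of s0] y[of s0] by (simp add: algebra_simps sum_subtractf)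
  moreover have "\<bar>\<Sum>u\<in>UNIV. Ppol P \<pi> s0 u * (x u - y u)\<bar> \<le> M"
    by (rule stoch_bound) (use Ppol_nonneg[OF pol] Ppol_sum[OF pol] Mge in auto)
  ultimately have "M \<le> \<gamma> * M" using s0 g0 by (simp add: abs_mult mult_left_mono)
  then have "M \<le> 0" using g1 using Mge[of s0] by (metis abs_ge_zero dual_order.trans mult_le_cancel_right1 not_le)
  then show ?thesis using Mge[of s] by simp
qed

end



context
  fixes P :: "'s::finite \<Rightarrow> 'a::finite \<Rightarrow> 's \<Rightarrow> real" and R :: "'s \<Rightarrow> 'a \<Rightarrow> real" and \<gamma> :: real
  assumes mdp: "is_mdp P R \<gamma>"
begin

lemma V_W: "V P R \<gamma> \<pi> s = Wd P \<gamma> \<pi> (rpol R \<pi>) s"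
  unfolding V_def Wd_def rpol_def by (simp add: sum_distrib_left mult.assoc)

lemma V_bell: "\<pi> \<in> policies \<Longrightarrow> V P R \<gamma> \<pi> s = rpol R \<pi> s + \<gamma> * (\<Sum>u\<in>UNIV. Ppol P \<pi> s u * V P R \<gamma> \<pi> u)"
  unfolding V_W by (rule W_eq[OF mdp])

lemma Q_inner: "inner (Q P R \<gamma> \<pi> s) (\<pi>' s) = rpol R \<pi>' s + \<gamma> * (\<Sum>u\<in>UNIV. Ppol P \<pi>' s u * V P R \<gamma> \<pi> u)"
proof -
  have "inner (Q P R \<gamma> \<pi> s) (\<pi>' s) = (\<Sum>a\<in>UNIV. (R s a + \<gamma> * (\<Sum>u\<in>UNIV. P s a u * V P R \<gamma> \<pi> u)) * \<pi>' s $ a)"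
    by (simp add: inner_vec_def Q_def)
  also have "\<dots> = (\<Sum>a\<in>UNIV. \<pi>' s $ a * R s a) + \<gamma> * (\<Sum>a\<in>UNIV. \<Sum>u\<in>UNIV. \<pi>' s $ a * P s a u * V P R \<gamma> \<pi> u)"
    by (simp add: algebra_simps sum.distrib sum_distrib_left)
  also have "(\<Sum>a\<in>UNIV. \<Sum>u\<in>UNIV. \<pi>' s $ a * P s a u * V P R \<gamma> \<pi> u) = (\<Sum>u\<in>UNIV. Ppol P \<pi>' s u * V P R \<gamma> \<pi> u)"
    unfolding Ppol_def by (subst sum.swap) (simp add: sum_distrib_right)
  finally show ?thesis by (simp add: rpol_def)
qed

lemma Q_self: "\<pi> \<in> policies \<Longrightarrow> inner (Q P R \<gamma> \<pi> s) (\<pi> s) = V P R \<gamma> \<pi> s"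
  using Q_inner V_bell by simp

lemma PDL:
  assumes "\<pi> \<in> policies" "\<pi>' \<in> policies"
  shows "V P R \<gamma> \<pi>' s - V P R \<gamma> \<pi> s = Wd P \<gamma> \<pi>' (\<lambda>u. inner (Q P R \<gamma> \<pi> u) (\<pi>' u - \<pi> u)) s"
proof (rule W_unique[OF mdp assms(2)])
  fix s
  show "Wd P \<gamma> \<pi>' (\<lambda>u. inner (Q P R \<gamma> \<pi> u) (\<pi>' u - \<pi> u)) s =
     inner (Q P R \<gamma> \<pi> s) (\<pi>' s - \<pi> s) + \<gamma> * (\<Sum>u\<in>UNIV. Ppol P \<pi>' s u * Wd P \<gamma> \<pi>' (\<lambda>u. inner (Q P R \<gamma> \<pi> u) (\<pi>' u - \<pi> u)) u)"
    by (rule W_eq[OF mdp assms(2)])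
  have "inner (Q P R \<gamma> \<pi> s) (\<pi>' s - \<pi> s) = rpol R \<pi>' s + \<gamma> * (\<Sum>u\<in>UNIV. Ppol P \<pi>' s u * V P R \<gamma> \<pi> u) - V P R \<gamma> \<pi> s"
    using Q_inner[of \<pi> s \<pi>'] Q_self[OF assms(1), of s] by (simp add: inner_diff_right)
  then show "V P R \<gamma> \<pi>' s - V P R \<gamma> \<pi> s = inner (Q P R \<gamma> \<pi> s) (\<pi>' s - \<pi> s) +
     \<gamma> * (\<Sum>u\<in>UNIV. Ppol P \<pi>' s u * (V P R \<gamma> \<pi>' u - V P R \<gamma> \<pi> u))"
    using V_bell[OF assms(2), of s] by (simp add: algebra_simps sum_subtractf)
qed

lemma Pstep_le1: "\<pi> \<in> policies \<Longrightarrow> Pstep P \<pi> t s s' \<le> 1"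
  using member_le_sum[of s' UNIV "Pstep P \<pi> t s"] Pstep_sum[OF mdp] Pstep_nonneg[OF mdp] by auto

lemma dsum_summable: "\<pi> \<in> policies \<Longrightarrow> summable (\<lambda>t. \<gamma>^t * Pstep P \<pi> t s s')"
  by (rule geo_summable[OF g0[OF mdp] g1[OF mdp], of _ 1])
     (use Pstep_le1 Pstep_nonneg[OF mdp] g0[OF mdp] in \<open>auto simp: abs_mult intro: mult_left_le\<close>)

lemma W_dvis:
  assumes pol: "\<pi> \<in> policies"
  shows "Wd P \<gamma> \<pi> f s = (\<Sum>s'\<in>UNIV. dvis P \<gamma> \<pi> s s' * f s') / (1 - \<gamma>)"
proof -
  have g: "1 - \<gamma> > 0" using g1[OF mdp] by simp
  have "Wd P \<gamma> \<pi> f s = (\<Sum>t. \<Sum>s'\<in>UNIV. \<gamma>^t * Pstep P \<pi> t s s' * f s')"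
    unfolding Wd_def by (simp add: sum_distrib_left mult.assoc)
  also have "\<dots> = (\<Sum>s'\<in>UNIV. \<Sum>t. \<gamma>^t * Pstep P \<pi> t s s' * f s')"
    by (rule suminf_sum) (intro summable_mult2 dsum_summable pol)
  also have "\<dots> = (\<Sum>s'\<in>UNIV. (\<Sum>t. \<gamma>^t * Pstep P \<pi> t s s') * f s')"
    by (intro sum.cong refl suminf_mult2[symmetric] dsum_summable pol)
  also have "\<dots> = (\<Sum>s'\<in>UNIV. dvis P \<gamma> \<pi> s s' * f s') / (1 - \<gamma>)"
    using g by (simp add: dvis_def sum_divide_distrib)
  finally show ?thesis .
qed

lemma dvis_nonneg: "\<pi> \<in> policies \<Longrightarrow> 0 \<le> dvis P \<gamma> \<pi> s s'"
  unfolding dvis_def using g1[OF mdp] g0[OF mdp]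
  by (intro mult_nonneg_nonneg suminf_nonneg dsum_summable) (auto intro: Pstep_nonneg[OF mdp])

lemma dvis_sum: assumes pol: "\<pi> \<in> policies" shows "(\<Sum>s'\<in>UNIV. dvis P \<gamma> \<pi> s s') = 1"
proof -
  have g: "1 - \<gamma> > 0" using g1[OF mdp] by simp
  have "Wd P \<gamma> \<pi> (\<lambda>_. 1) s = (\<Sum>t. \<gamma>^t)" unfolding Wd_def using Pstep_sum[OF mdp pol] by simp
  also have "\<dots> = 1 / (1 - \<gamma>)" using suminf_geometric[of \<gamma>] g0[OF mdp] g1[OF mdp] by simp
  finally show ?thesis using W_dvis[OF pol, of "\<lambda>_. 1" s] g by (simp add: field_simps)
qed

lemma dvis_diag: assumes pol: "\<pi> \<in> policies" shows "1 - \<gamma> \<le> dvis P \<gamma> \<pi> s s"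
proof -
  have "(\<Sum>t<1. \<gamma>^t * Pstep P \<pi> t s s) \<le> (\<Sum>t. \<gamma>^t * Pstep P \<pi> t s s)"
    by (rule sum_le_suminf[OF dsum_summable[OF pol]])
       (use g0[OF mdp] Pstep_nonneg[OF mdp pol] in auto)
  then have "1 \<le> (\<Sum>t. \<gamma>^t * Pstep P \<pi> t s s)" by simp
  then show ?thesis unfolding dvis_def using g1[OF mdp] by simp
qed

lemma V_bounds: assumes pol: "\<pi> \<in> policies"
  shows "0 \<le> V P R \<gamma> \<pi> s" "V P R \<gamma> \<pi> s \<le> 1 / (1 - \<gamma>)"
proof -
  have g: "1 - \<gamma> > 0" using g1[OF mdp] by simp
  have r: "0 \<le> rpol R \<pi> u" "rpol R \<pi> u \<le> 1" for u
  proof -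
    show "0 \<le> rpol R \<pi> u" unfolding rpol_def
      by (intro sum_nonneg mult_nonneg_nonneg pol_nonneg[OF pol] R_bnd[OF mdp])
    have "rpol R \<pi> u \<le> (\<Sum>a\<in>UNIV. \<pi> u $ a * 1)" unfolding rpol_def
      by (intro sum_mono mult_left_mono pol_nonneg[OF pol] R_bnd[OF mdp])
    then show "rpol R \<pi> u \<le> 1" using pol_sum[OF pol] by simp
  qed
  have e: "V P R \<gamma> \<pi> s = (\<Sum>s'\<in>UNIV. dvis P \<gamma> \<pi> s s' * rpol R \<pi> s') / (1 - \<gamma>)"
    unfolding V_W W_dvis[OF pol] ..
  have "0 \<le> (\<Sum>s'\<in>UNIV. dvis P \<gamma> \<pi> s s' * rpol R \<pi> s')"
    by (intro sum_nonneg mult_nonneg_nonneg dvis_nonneg[OF pol] r)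
  then show "0 \<le> V P R \<gamma> \<pi> s" unfolding e using g by simp
  have "(\<Sum>s'\<in>UNIV. dvis P \<gamma> \<pi> s s' * rpol R \<pi> s') \<le> (\<Sum>s'\<in>UNIV. dvis P \<gamma> \<pi> s s' * 1)"
    by (intro sum_mono mult_left_mono dvis_nonneg[OF pol] r)
  then show "V P R \<gamma> \<pi> s \<le> 1 / (1 - \<gamma>)" unfolding e using g dvis_sum[OF pol]
    by (simp add: divide_right_mono)
qed

end



lemma convex_simplex: "convex (act_simplex :: (real^'a::finite) set)"
proof (rule convexI)
  fix x y :: "real^'a" and u v :: real
  assume xy: "x \<in> act_simplex" "y \<in> act_simplex" and uv: "0 \<le> u" "0 \<le> v" "u + v = 1"
  have "(\<Sum>a\<in>UNIV. (u *\<^sub>R x + v *\<^sub>R y) $ a) = u * (\<Sum>a\<in>UNIV. x $ a) + v * (\<Sum>a\<in>UNIV. y $ a)"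
    by (simp add: sum.distrib sum_distrib_left)
  then show "u *\<^sub>R x + v *\<^sub>R y \<in> act_simplex"
    using xy uv unfolding act_simplex_def by (auto intro!: add_nonneg_nonneg mult_nonneg_nonneg)
qed

lemma breg_nonneg:
  assumes leg: "legendre C h" and p: "p \<in> C" and x: "x \<in> interior C"
  shows "0 \<le> bregman h p x"
proof -
  have "convex C" "convex_on C h" "h differentiable (at x)" using leg x unfolding legendre_def by auto
  then have d: "(h has_derivative frechet_derivative h (at x)) (at x)" using frechet_derivative_works by blast
  have "x \<in> C" using x interior_subset by auto
  from grad_ineq[OF \<open>convex_on C h\<close> \<open>convex C\<close> this p d]
  show ?thesis unfolding bregman_def by simp
qed

lemma breg_self:
  assumes leg: "legendre C h" and x: "x \<in> interior C"
  shows "bregman h x x = 0"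
proof -
  have "h differentiable (at x)" using leg x unfolding legendre_def by auto
  then have "linear (frechet_derivative h (at x))" using frechet_derivative_works has_derivative_linear by blast
  then show ?thesis unfolding bregman_def by (simp add: linear_0)
qed

lemma three_point:
  fixes h :: "real^'a::finite \<Rightarrow> real"
  assumes leg: "legendre C h" and pk: "pk \<in> interior C" and p1: "p1 \<in> interior C" "p1 \<in> act_simplex"
    and mn: "\<And>p. p \<in> act_simplex \<Longrightarrow> \<eta> * inner q p1 + bregman h p1 pk \<le> \<eta> * inner q p + bregman h p pk"
    and p: "p \<in> act_simplex"
  shows "\<eta> * inner q p1 + bregman h p1 pk + bregman h p p1 \<le> \<eta> * inner q p + bregman h p pk"
proof -
  have dif: "\<forall>x\<in>interior C. h differentiable (at x)" using leg unfolding legendre_def by auto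
  define Dk where "Dk = frechet_derivative h (at pk)"
  define D1 where "D1 = frechet_derivative h (at p1)"
  have Dkh: "(h has_derivative Dk) (at pk)" using dif pk frechet_derivative_works Dk_def by blast
  have D1h: "(h has_derivative D1) (at p1)" using dif p1 frechet_derivative_works D1_def by blast
  have lk: "bounded_linear Dk" using Dkh has_derivative_bounded_linear by blast
  have l1: "linear D1" using D1h has_derivative_linear by blast
  define \<Phi> where "\<Phi> x = \<eta> * inner q x + (h x - h pk - Dk (x - pk))" for x
  have Phi: "\<Phi> x = \<eta> * inner q x + bregman h x pk" for x unfolding \<Phi>_def bregman_def Dk_def by simp
  have dPhi: "(\<Phi> has_derivative (\<lambda>y. \<eta> * inner q y + (D1 y - 0 - Dk (y - 0)))) (at p1)"
    unfolding \<Phi>_def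
    by (intro derivative_intros D1h bounded_linear.has_derivative[OF lk]) 
  have "0 \<le> \<eta> * inner q (p - p1) + (D1 (p - p1) - 0 - Dk (p - p1 - 0))"
  proof (rule dir_lower[OF dPhi])
    fix t :: real assume t: "0 < t" "t \<le> 1"
    have "(1 - t) *\<^sub>R p1 + t *\<^sub>R p \<in> act_simplex"
      using convexD_alt[OF convex_simplex p1(2) p] t by simp
    moreover have "(1 - t) *\<^sub>R p1 + t *\<^sub>R p = p1 + t *\<^sub>R (p - p1)" by (simp add: algebra_simps)
    ultimately show "\<Phi> p1 + t * 0 \<le> \<Phi> (p1 + t *\<^sub>R (p - p1))" using mn unfolding Phi by simp
  qed
  then have opt: "0 \<le> \<eta> * inner q (p - p1) + D1 (p - p1) - Dk (p - p1)" by simp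
  have e: "p - pk = (p - p1) + (p1 - pk)" by simp
  have "Dk (p - pk) = Dk (p - p1) + Dk (p1 - pk)"
    unfolding e using lk bounded_linear.linear linear_add by blast
  then show ?thesis using opt unfolding bregman_def Dk_def[symmetric] D1_def[symmetric]
    by (simp add: inner_diff_right algebra_simps)
qed




lemma final_alg:
  fixes a e n D :: real
  assumes "a > 0" "e > 0" "n > 0"
  shows "(D + e / a) / (e * a * n) = 1 / n * (D / (e * a) + 1 / a^2)"
  using assms by (simp add: field_simps power2_eq_square)

theorem theorem8:
  fixes P :: "'s::finite \<Rightarrow> 'a::finite \<Rightarrow> 's \<Rightarrow> real"
    and R :: "'s \<Rightarrow> 'a \<Rightarrow> real"
    and \<gamma> \<eta> :: real
    and C :: "(real ^ 'a) set" and h :: "real ^ 'a \<Rightarrow> real"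
    and \<pi> :: "nat \<Rightarrow> 's \<Rightarrow> real ^ 'a"
    and \<pi>star :: "'s \<Rightarrow> real ^ 'a"
    and \<rho> :: "'s \<Rightarrow> real"
  assumes mdp: "is_mdp P R \<gamma>"
    and leg: "legendre C h"
    and dom: "act_simplex \<subseteq> C" "rel_interior act_simplex \<subseteq> rel_interior C"
    and eta: "\<eta> > 0"
    and init: "\<pi> 0 \<in> rint_policies"
    and pmd: "is_pmd P R \<gamma> h (\<lambda>_. \<eta>) \<pi>"
    and opt: "\<pi>star \<in> policies" "\<forall>\<pi>'\<in>policies. \<forall>s. V P R \<gamma> \<pi>star s \<le> V P R \<gamma> \<pi>' s"
    and rho: "\<forall>s. 0 \<le> \<rho> s" "(\<Sum>s\<in>UNIV. \<rho> s) = 1"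
  shows "\<forall>k::nat. Vrho P R \<gamma> \<rho> (\<pi> k) - Vstar P R \<gamma> \<rho>
           \<le> 1 / (real k + 1) *
              ((\<Sum>s\<in>UNIV. drho P \<gamma> \<rho> \<pi>star s * bregman h (\<pi>star s) (\<pi> 0 s)) / (\<eta> * (1 - \<gamma>))
               + 1 / (1 - \<gamma>)^2)"
proof -
  have g0: "0 \<le> \<gamma>" and g1: "\<gamma> < 1" using mdp by (auto simp: is_mdp_def)
  have gp: "0 < 1 - \<gamma>" using g1 by simp
  have cC: "convex C" and intne: "interior C \<noteq> {}" and dif: "\<forall>x\<in>interior C. h differentiable (at x)"
    using leg unfolding legendre_def by auto
  have riC: "rel_interior C = interior C" by (rule rel_interior_nonempty_interior[OF intne])
  have ri0: "\<pi> 0 s \<in> rel_interior act_simplex" for s using init unfolding rint_policies_def by auto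
  have u0: "\<pi> 0 s \<in> act_simplex" for s using rel_interior_subset ri0 by blast
  have u0i: "\<pi> 0 s \<in> interior C" for s using dom(2) ri0 riC by auto
  define q where "q k s = Q P R \<gamma> (\<pi> k) s" for k s
  define obj where "obj k s p = \<eta> * inner (q k s) p + bregman h p (\<pi> k s)" for k s p
  have am1: "\<pi> (Suc k) s \<in> act_simplex" for k s
    using pmd unfolding is_pmd_def is_arg_min_def by auto
  have am2: "obj k s (\<pi> (Suc k) s) \<le> obj k s p" if "p \<in> act_simplex" for k s p
    using pmd that unfolding is_pmd_def is_arg_min_def obj_def q_def by (auto simp: not_less)
  have inv: "\<pi> k \<in> policies \<and> (\<forall>s. \<pi> k s \<in> interior C)" for k
  proof (induction k)
    case 0 then show ?case using u0 u0i by (auto simp: policies_def)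
  next
    case (Suc k)
    have "\<pi> (Suc k) s \<in> interior C" for s
    proof -
      define Dk where "Dk = frechet_derivative h (at (\<pi> k s))"
      have Dkh: "(h has_derivative Dk) (at (\<pi> k s))" using dif Suc frechet_derivative_works Dk_def by blast
      have lk: "linear Dk" using Dkh has_derivative_linear by blast
      define lf where "lf p = \<eta> * inner (q k s) p - Dk p" for p
      have llf: "linear lf"
        by (rule linearI) (use lk in \<open>simp_all add: lf_def linear_add linear_scale inner_add_right algebra_simps\<close>)
      show ?thesis
      proof (rule minimizer_interior[OF leg convex_simplex dom(1) u0 u0i llf am1])
        fix p :: "real^'a" assume p: "p \<in> act_simplex"
        have e: "obj k s p = h p + lf p - h (\<pi> k s) + Dk (\<pi> k s)" for p
          unfolding obj_def lf_def bregman_def Dk_def[symmetric] using lk by (simp add: linear_diff)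
        show "h (\<pi> (Suc k) s) + lf (\<pi> (Suc k) s) \<le> h p + lf p" using am2[OF p, of k s] unfolding e by simp
      qed
    qed
    moreover have "\<pi> (Suc k) \<in> policies" using am1 by (auto simp: policies_def)
    ultimately show ?case by blast
  qed
  have pol: "\<pi> k \<in> policies" for k using inv by blast
  have intr: "\<pi> k s \<in> interior C" for k s using inv by blast
  have polS: "\<pi> k s \<in> act_simplex" for k s using pol unfolding policies_def by auto
  have starS: "\<pi>star s \<in> act_simplex" for s using opt(1) unfolding policies_def by auto
  have bnn: "0 \<le> bregman h p (\<pi> k s)" if "p \<in> act_simplex" for p k s
    using breg_nonneg[OF leg _ intr] that dom(1) by auto
  have TP: "\<eta> * inner (q k s) (\<pi> (Suc k) s) + bregman h (\<pi> (Suc k) s) (\<pi> k s) + bregman h p (\<pi> (Suc k) s)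
      \<le> \<eta> * inner (q k s) p + bregman h p (\<pi> k s)" if p: "p \<in> act_simplex" for k s p
    by (rule three_point[OF leg intr intr am1 _ p]) (use am2 in \<open>simp add: obj_def\<close>)
  define gk where "gk k s = inner (q k s) (\<pi> (Suc k) s - \<pi> k s)" for k s
  have desc: "gk k s \<le> 0" for k s
  proof -
    have "\<eta> * inner (q k s) (\<pi> (Suc k) s) + bregman h (\<pi> (Suc k) s) (\<pi> k s) + bregman h (\<pi> k s) (\<pi> (Suc k) s)
      \<le> \<eta> * inner (q k s) (\<pi> k s)"
      using TP[of "\<pi> k s" k s, OF polS] breg_self[OF leg intr[of k s]] by simp
    moreover have "0 \<le> bregman h (\<pi> (Suc k) s) (\<pi> k s)" "0 \<le> bregman h (\<pi> k s) (\<pi> (Suc k) s)"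
      using bnn polS by auto
    ultimately have "\<eta> * gk k s \<le> 0" unfolding gk_def by (simp add: inner_diff_right algebra_simps)
    then show ?thesis using eta by (simp add: mult_le_0_iff)
  qed
  define Vk where "Vk k s = V P R \<gamma> (\<pi> k) s" for k s
  have mono: "Vk (Suc k) s - Vk k s \<le> gk k s" for k s
  proof -
    have e: "Vk (Suc k) s - Vk k s = (\<Sum>u\<in>UNIV. dvis P \<gamma> (\<pi> (Suc k)) s u * gk k u) / (1 - \<gamma>)"
      unfolding Vk_def PDL[OF mdp pol pol] W_dvis[OF mdp pol] gk_def q_def ..
    have "(\<Sum>u\<in>UNIV. dvis P \<gamma> (\<pi> (Suc k)) s u * gk k u)
        = dvis P \<gamma> (\<pi> (Suc k)) s s * gk k s + (\<Sum>u\<in>UNIV - {s}. dvis P \<gamma> (\<pi> (Suc k)) s u * gk k u)"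
      by (simp add: sum.remove)
    also have "(\<Sum>u\<in>UNIV - {s}. dvis P \<gamma> (\<pi> (Suc k)) s u * gk k u) \<le> 0"
      by (intro sum_nonpos mult_nonneg_nonpos dvis_nonneg[OF mdp pol] desc)
    also have "dvis P \<gamma> (\<pi> (Suc k)) s s * gk k s \<le> (1 - \<gamma>) * gk k s"
      by (rule mult_right_mono_neg[OF dvis_diag[OF mdp pol] desc])
    finally have "(\<Sum>u\<in>UNIV. dvis P \<gamma> (\<pi> (Suc k)) s u * gk k u) \<le> (1 - \<gamma>) * gk k s" by simp
    then show ?thesis unfolding e using gp by (simp add: pos_divide_le_eq mult.commute)
  qed
  define dst where "dst s = drho P \<gamma> \<rho> \<pi>star s" for s
  have dst_nn: "0 \<le> dst s" for s
    unfolding dst_def drho_def using rho(1) dvis_nonneg[OF mdp opt(1)] by (auto intro: sum_nonneg)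
  have dst_sum: "(\<Sum>s\<in>UNIV. dst s) = 1"
  proof -
    have "(\<Sum>s\<in>UNIV. dst s) = (\<Sum>s0\<in>UNIV. \<rho> s0 * (\<Sum>s\<in>UNIV. dvis P \<gamma> \<pi>star s0 s))"
      unfolding dst_def drho_def by (subst sum.swap) (simp add: sum_distrib_left)
    also have "\<dots> = 1" using dvis_sum[OF mdp opt(1)] rho(2) by simp
    finally show ?thesis .
  qed
  have PDLs: "Vrho P R \<gamma> \<rho> \<pi>star - Vrho P R \<gamma> \<rho> (\<pi> k)
      = (\<Sum>u\<in>UNIV. dst u * inner (q k u) (\<pi>star u - \<pi> k u)) / (1 - \<gamma>)" for k
  proof -
    have "Vrho P R \<gamma> \<rho> \<pi>star - Vrho P R \<gamma> \<rho> (\<pi> k) = (\<Sum>s0\<in>UNIV. \<rho> s0 * (V P R \<gamma> \<pi>star s0 - V P R \<gamma> (\<pi> k) s0))"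
      unfolding Vrho_def by (simp add: sum_subtractf algebra_simps)
    also have "\<dots> = (\<Sum>s0\<in>UNIV. \<rho> s0 * ((\<Sum>u\<in>UNIV. dvis P \<gamma> \<pi>star s0 u * inner (q k u) (\<pi>star u - \<pi> k u)) / (1 - \<gamma>)))"
      unfolding PDL[OF mdp pol opt(1)] W_dvis[OF mdp opt(1)] q_def ..
    also have "\<dots> = (\<Sum>s0\<in>UNIV. \<Sum>u\<in>UNIV. \<rho> s0 * dvis P \<gamma> \<pi>star s0 u * inner (q k u) (\<pi>star u - \<pi> k u)) / (1 - \<gamma>)"
      by (simp add: sum_divide_distrib sum_distrib_left mult.assoc)
    also have "\<dots> = (\<Sum>u\<in>UNIV. dst u * inner (q k u) (\<pi>star u - \<pi> k u)) / (1 - \<gamma>)"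
      unfolding dst_def drho_def by (subst sum.swap) (simp add: sum_distrib_right)
    finally show ?thesis .
  qed
  define Ds where "Ds k s = bregman h (\<pi>star s) (\<pi> k s)" for k s
  have key: "\<eta> * (Vk (Suc k) s - Vk k s) + \<eta> * inner (q k s) (\<pi> k s - \<pi>star s) \<le> Ds k s - Ds (Suc k) s" for k s
  proof -
    have t: "\<eta> * inner (q k s) (\<pi> (Suc k) s) + bregman h (\<pi> (Suc k) s) (\<pi> k s) + Ds (Suc k) s
      \<le> \<eta> * inner (q k s) (\<pi>star s) + Ds k s"
      using TP[of "\<pi>star s" k s, OF starS] unfolding Ds_def .
    have b: "0 \<le> bregman h (\<pi> (Suc k) s) (\<pi> k s)" using bnn polS by auto
    have m: "\<eta> * (Vk (Suc k) s - Vk k s) \<le> \<eta> * gk k s" using mono eta by (intro mult_left_mono) auto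
    show ?thesis using t b m unfolding gk_def by (simp add: inner_diff_right algebra_simps)
  qed
  define \<Psi> where "\<Psi> k = (\<Sum>s\<in>UNIV. dst s * Vk k s)" for k
  define E where "E k = Vrho P R \<gamma> \<rho> (\<pi> k) - Vrho P R \<gamma> \<rho> \<pi>star" for k
  define Dst where "Dst k = (\<Sum>s\<in>UNIV. dst s * Ds k s)" for k
  have step: "\<eta> * (\<Psi> (Suc k) - \<Psi> k) + \<eta> * (1 - \<gamma>) * E k \<le> Dst k - Dst (Suc k)" for k
  proof -
    have w: "(\<Sum>s\<in>UNIV. dst s * (\<eta> * (Vk (Suc k) s - Vk k s) + \<eta> * inner (q k s) (\<pi> k s - \<pi>star s)))
        \<le> (\<Sum>s\<in>UNIV. dst s * (Ds k s - Ds (Suc k) s))"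
      by (intro sum_mono mult_left_mono key dst_nn)
    have l: "(\<Sum>s\<in>UNIV. dst s * (\<eta> * (Vk (Suc k) s - Vk k s) + \<eta> * inner (q k s) (\<pi> k s - \<pi>star s)))
        = \<eta> * (\<Psi> (Suc k) - \<Psi> k) + \<eta> * (\<Sum>s\<in>UNIV. dst s * inner (q k s) (\<pi> k s - \<pi>star s))"
      unfolding \<Psi>_def by (simp add: algebra_simps sum.distrib sum_subtractf sum_distrib_left)
    have "(\<Sum>s\<in>UNIV. dst s * inner (q k s) (\<pi> k s - \<pi>star s)) = - (\<Sum>s\<in>UNIV. dst s * inner (q k s) (\<pi>star s - \<pi> k s))"
      by (simp add: sum_negf[symmetric] inner_diff_right algebra_simps)
    also have "\<dots> = (1 - \<gamma>) * E k" using PDLs[of k] gp unfolding E_def by (simp add: field_simps)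
    finally have p: "(\<Sum>s\<in>UNIV. dst s * inner (q k s) (\<pi> k s - \<pi>star s)) = (1 - \<gamma>) * E k" .
    have r: "(\<Sum>s\<in>UNIV. dst s * (Ds k s - Ds (Suc k) s)) = Dst k - Dst (Suc k)"
      unfolding Dst_def by (simp add: algebra_simps sum_subtractf)
    show ?thesis using w unfolding l r p by simp
  qed
  have tel: "\<eta> * (\<Psi> K - \<Psi> 0) + \<eta> * (1 - \<gamma>) * (\<Sum>k<K. E k) \<le> Dst 0 - Dst K" for K
  proof (induction K)
    case 0 then show ?case by simp
  next
    case (Suc K)
    then show ?case using step[of K] by (simp add: algebra_simps)
  qed
  have Dst_nn: "0 \<le> Dst K" for K
    unfolding Dst_def Ds_def using dst_nn bnn starS by (auto intro!: sum_nonneg mult_nonneg_nonneg)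
  have Psi_b: "0 \<le> \<Psi> k" "\<Psi> k \<le> 1 / (1 - \<gamma>)" for k
  proof -
    show "0 \<le> \<Psi> k" unfolding \<Psi>_def Vk_def
      using dst_nn V_bounds(1)[OF mdp pol] by (auto intro!: sum_nonneg mult_nonneg_nonneg)
    have "\<Psi> k \<le> (\<Sum>s\<in>UNIV. dst s * (1 / (1 - \<gamma>)))" unfolding \<Psi>_def Vk_def
    proof (rule sum_mono)
      fix s show "dst s * V P R \<gamma> (\<pi> k) s \<le> dst s * (1 / (1 - \<gamma>))"
        by (rule mult_left_mono[OF V_bounds(2)[OF mdp pol] dst_nn])
    qed
    also have "\<dots> = (\<Sum>s\<in>UNIV. dst s) * (1 / (1 - \<gamma>))" by (rule sum_distrib_right[symmetric])
    finally show "\<Psi> k \<le> 1 / (1 - \<gamma>)" using dst_sum by simp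
  qed
  have Vr_dec: "Vrho P R \<gamma> \<rho> (\<pi> (Suc k)) \<le> Vrho P R \<gamma> \<rho> (\<pi> k)" for k
  proof -
    have "Vk (Suc k) s \<le> Vk k s" for s using mono[of k s] desc[of k s] by simp
    then have "\<rho> s * V P R \<gamma> (\<pi> (Suc k)) s \<le> \<rho> s * V P R \<gamma> (\<pi> k) s" for s
      unfolding Vk_def using rho(1) by (intro mult_left_mono) auto
    then show ?thesis unfolding Vrho_def by (intro sum_mono)
  qed
  have dec: "decseq (\<lambda>k. Vrho P R \<gamma> \<rho> (\<pi> k))" by (rule decseq_SucI) (rule Vr_dec)
  have lowb: "Vrho P R \<gamma> \<rho> \<pi>star \<le> Vrho P R \<gamma> \<rho> \<pi>'" if pp: "\<pi>' \<in> policies" for \<pi>'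
  proof -
    have "\<rho> s * V P R \<gamma> \<pi>star s \<le> \<rho> s * V P R \<gamma> \<pi>' s" for s
      using opt(2) pp rho(1) by (intro mult_left_mono) auto
    then show ?thesis unfolding Vrho_def by (intro sum_mono)
  qed
  have ne: "(policies :: ('s \<Rightarrow> real^'a) set) \<noteq> {}" using opt(1) by auto
  have Vstar_ge: "Vrho P R \<gamma> \<rho> \<pi>star \<le> Vstar P R \<gamma> \<rho>"
    unfolding Vstar_def using cINF_greatest[OF ne lowb] .
  show ?thesis
  proof
    fix K :: nat
    have Esum: "real (Suc K) * E K \<le> (\<Sum>k<Suc K. E k)"
    proof -
      have "(\<Sum>k<Suc K. E K) \<le> (\<Sum>k<Suc K. E k)"
        by (intro sum_mono) (use dec in \<open>auto simp: E_def decseq_def\<close>)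
      then show ?thesis by simp
    qed
    have A: "\<eta> * (1 - \<gamma>) * (real (Suc K) * E K) \<le> Dst 0 + \<eta> / (1 - \<gamma>)"
    proof -
      have "\<eta> * (1 - \<gamma>) * (real (Suc K) * E K) \<le> \<eta> * (1 - \<gamma>) * (\<Sum>k<Suc K. E k)"
        using Esum eta gp by (intro mult_left_mono) auto
      moreover have "\<eta> * (\<Psi> 0 - \<Psi> (Suc K)) \<le> \<eta> * (1 / (1 - \<gamma>))"
        using Psi_b[of 0] Psi_b[of "Suc K"] eta by (intro mult_left_mono) auto
      ultimately show ?thesis using tel[of "Suc K"] Dst_nn[of "Suc K"] by (simp add: algebra_simps)
    qed
    have pos: "0 < \<eta> * (1 - \<gamma>) * real (Suc K)" using eta gp by simp
    have "E K \<le> (Dst 0 + \<eta> / (1 - \<gamma>)) / (\<eta> * (1 - \<gamma>) * real (Suc K))"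
      using A pos by (simp add: pos_le_divide_eq mult.commute mult.left_commute)
    also have "\<dots> = 1 / (real K + 1) * (Dst 0 / (\<eta> * (1 - \<gamma>)) + 1 / (1 - \<gamma>)^2)"
      using final_alg[OF gp eta, of "real K + 1" "Dst 0"] by (simp add: add.commute)
    finally have "E K \<le> 1 / (real K + 1) * (Dst 0 / (\<eta> * (1 - \<gamma>)) + 1 / (1 - \<gamma>)^2)" .
    then show "Vrho P R \<gamma> \<rho> (\<pi> K) - Vstar P R \<gamma> \<rho>
           \<le> 1 / (real K + 1) *
              ((\<Sum>s\<in>UNIV. drho P \<gamma> \<rho> \<pi>star s * bregman h (\<pi>star s) (\<pi> 0 s)) / (\<eta> * (1 - \<gamma>))
               + 1 / (1 - \<gamma>)^2)"
      using Vstar_ge unfolding E_def Dst_def Ds_def dst_def by linarith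
  qed
qed


end
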